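(* Let $p,q$ be integers and let $(u_n)_{n\ge0}$ be the Lucas sequence defined by $u_0=0$, $u_1=1$ and $u_{n+2}=pu_{n+1}+qu_n$ for all $n\ge0$. Then the following are equivalent: (a) for every $k\ge1$ the integers $u_0,\dots,u_{2^k-1}$ are pairwise distinct and $\mathcal{D}_{\mathbf u}(2^k)=2^k$ (i.e. $u_0,\dots,u_{2^k-1}$ are pairwise incongruent modulo $2^k$); (b) $p\equiv 2\pmod 4$ and $q\equiv 3\pmod 4$.
   Context: For a sequence $\mathbf w=(w_n)_{n\ge 0}$ of integers and a positive integer $n$ such that $w_0,\dots,w_{n-1}$ are pairwise distinct, the discriminator $\mathcal{D}_{\mathbf w}(n)$ is the smallest positive integer $m$ such that $w_0,\dots,w_{n-1}$ are pairwise incongruent modulo $m$. *)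

theory Defs
  imports Main
begin

fun lucas :: "int \<Rightarrow> int \<Rightarrow> nat \<Rightarrow> int" where
  "lucas p q 0 = 0"
| "lucas p q (Suc 0) = 1"
| "lucas p q (Suc (Suc n)) = p * lucas p q (Suc n) + q * lucas p q n"

definition first_distinct :: "(nat \<Rightarrow> int) \<Rightarrow> nat \<Rightarrow> bool" where
  "first_distinct w n \<longleftrightarrow> (\<forall>i<n. \<forall>j<n. i \<noteq> j \<longrightarrow> w i \<noteq> w j)"

definition discriminator :: "(nat \<Rightarrow> int) \<Rightarrow> nat \<Rightarrow> nat" where
  "discriminator w n = (LEAST m. m > 0 \<and>
      (\<forall>i<n. \<forall>j<n. i \<noteq> j \<longrightarrow> w i mod int m \<noteq> w j mod int m))"

end

theory Submission imports Defs begin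
lemma fin1:
  fixes pm qm :: int
  assumes "0 \<le> pm" "pm < 8" "0 \<le> qm" "qm < 8"
  and "\<forall>i<8. \<forall>j<8. i \<noteq> j \<longrightarrow> lucas pm qm i mod 8 \<noteq> lucas pm qm j mod 8"
  and "\<forall>i<4. \<forall>j<4. i \<noteq> j \<longrightarrow> lucas pm qm i mod 4 \<noteq> lucas pm qm j mod 4"
  shows "pm mod 4 = 2 \<and> qm mod 4 = 3"
proof -
  have l: "lucas pm qm 2 = pm" "lucas pm qm 3 = pm*pm+qm"
     "lucas pm qm 6 = pm^5 + 4*pm^3*qm + 3*pm*qm^2"
    by (simp_all add: eval_nat_numeral algebra_simps)
  have a4: "\<And>i j. i < 4 \<Longrightarrow> j < 4 \<Longrightarrow> i \<noteq> j \<Longrightarrow> lucas pm qm i mod 4 \<noteq> lucas pm qm j mod 4" using assms(6) by blast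
  have a8: "\<And>i j. i < 8 \<Longrightarrow> j < 8 \<Longrightarrow> i \<noteq> j \<Longrightarrow> lucas pm qm i mod 8 \<noteq> lucas pm qm j mod 8" using assms(5) by blast
  have h: "pm mod 4 \<noteq> 0" "pm mod 4 \<noteq> 1" "(pm*pm+qm) mod 4 \<noteq> 0"
    "(pm*pm+qm) mod 4 \<noteq> 1" "(pm*pm+qm) mod 4 \<noteq> pm mod 4"
    "(pm^5 + 4*pm^3*qm + 3*pm*qm^2) mod 8 \<noteq> 0"
    using a4[of 2 0] a4[of 2 1] a4[of 3 0] a4[of 3 1] a4[of 3 2] a8[of 6 0] unfolding l by simp_all
  have r: "pm \<in> {0,1,2,3,4,5,6,7}" "qm \<in> {0,1,2,3,4,5,6,7}" using assms(1-4) by auto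
  show ?thesis using r h
    by (simp only: insert_iff empty_iff simp_thms; elim disjE; simp)
qed

lemma lucas_mod: "lucas p q n mod m = lucas (p mod m) (q mod m) n mod m"
proof (induction p q n rule: lucas.induct)
  case (3 p q n)
  have h1: "(p * lucas p q (Suc n)) mod m = ((p mod m) * lucas (p mod m) (q mod m) (Suc n)) mod m"
    by (rule mod_mult_cong) (simp, rule 3)
  have h2: "(q * lucas p q n) mod m = ((q mod m) * lucas (p mod m) (q mod m) n) mod m"
    by (rule mod_mult_cong) (simp, rule 3)
  show ?case unfolding lucas.simps(3) by (rule mod_add_cong[OF h1 h2])
qed simp_all
lemma add_formula:
  "lucas p q (n + m + 1) = lucas p q (m+1) * lucas p q (n+1) + q * lucas p q m * lucas p q n"
proof -
  have "lucas p q (n + m + 1) = lucas p q (m+1) * lucas p q (n+1) + q * lucas p q m * lucas p q n \<and>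
        lucas p q (n + Suc m + 1) = lucas p q (Suc m+1) * lucas p q (n+1) + q * lucas p q (Suc m) * lucas p q n"
  proof (induction m)
    case 0
    then show ?case by (simp add: eval_nat_numeral)
  next
    case (Suc m)
    define a0 where "a0 = lucas p q m"
    define a1 where "a1 = lucas p q (Suc m)"
    define a2 where "a2 = lucas p q (Suc (Suc m))"
    define a3 where "a3 = lucas p q (Suc (Suc (Suc m)))"
    define b0 where "b0 = lucas p q n"
    define b1 where "b1 = lucas p q (Suc n)"
    define c1 where "c1 = lucas p q (n + m + 1)"
    define c2 where "c2 = lucas p q (n + Suc m + 1)"
    define c3 where "c3 = lucas p q (n + Suc (Suc m) + 1)"
    have r2: "a2 = p*a1 + q*a0" unfolding a2_def a1_def a0_def by simp
    have r3: "a3 = p*a2 + q*a1" unfolding a3_def a2_def a1_def by simp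
    have rc: "c3 = p*c2 + q*c1" unfolding c3_def c2_def c1_def
      by (simp add: add.commute)
    have H1: "c1 = a1*b1 + q*a0*b0" using conjunct1[OF Suc.IH] unfolding a0_def a1_def b0_def b1_def c1_def by (simp only: Suc_eq_plus1)
    have H2: "c2 = a2*b1 + q*a1*b0" using conjunct2[OF Suc.IH] unfolding a2_def a1_def b0_def b1_def c2_def by (simp only: Suc_eq_plus1)
    have "c3 = a3*b1 + q*a2*b0" unfolding rc H1 H2 r3 r2 by (simp add: algebra_simps)
    then have "lucas p q (n + Suc (Suc m) + 1) = lucas p q (Suc (Suc m)+1) * lucas p q (n+1) + q * lucas p q (Suc (Suc m)) * lucas p q n"
      unfolding c3_def a3_def b1_def a2_def b0_def by simp
    then show ?case using conjunct2[OF Suc.IH] by blast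
  qed
  then show ?thesis by simp
qed

lemma key:
  fixes p q :: int
  assumes pq: "p mod 4 = 2" "q mod 4 = 3" and k: "k \<ge> 1"
  shows "\<exists>a b. lucas p q (2^k) = 2^k*(2*a+1) \<and> lucas p q (2^k+1) = 1 + 2^k*(2*b+1)"
  using k
proof (induction k rule: nat_induct_at_least)
  case base
  obtain s where s: "p = 4*s+2" using pq(1) by (metis mult.commute div_mult_mod_eq)
  obtain r where r: "q = 4*r+3" using pq(2) by (metis mult.commute div_mult_mod_eq)
  have "lucas p q (2^1) = 2^1*(2*s+1)" by (simp add: eval_nat_numeral s)
  moreover have "lucas p q (2^1+1) = 1 + 2^1*(2*(4*s*s+4*s+1+r)+1)"
    by (simp add: eval_nat_numeral s r algebra_simps)
  ultimately show ?case by blast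
next
  case (Suc k)
  obtain s where s: "p = 4*s+2" using pq(1) by (metis mult.commute div_mult_mod_eq)
  obtain r where r: "q = 4*r+3" using pq(2) by (metis mult.commute div_mult_mod_eq)
  obtain a b where ab: "lucas p q (2^k) = 2^k*(2*a+1)" "lucas p q (2^k+1) = 1 + 2^k*(2*b+1)"
    using Suc by blast
  define N where "N = (2::nat)^k"
  define M where "M = (2::int)^k"
  have NM: "int N = M" unfolding N_def M_def by simp
  obtain m' where m': "M = 2*m'"
  proof -
    obtain i where "k = Suc i" using Suc(1) by (cases k) auto
    then have "M = 2*2^i" unfolding M_def by simp
    then show ?thesis using that by blast
  qed
  obtain j where j: "N = Suc j" unfolding N_def by (cases "(2::nat)^k") auto
  define A where "A = lucas p q j"
  define B where "B = lucas p q N"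
  define C where "C = lucas p q (N+1)"
  have B: "B = M*(2*a+1)" using ab unfolding B_def N_def M_def by simp
  have C: "C = 1 + M*(2*b+1)" using ab unfolding C_def N_def M_def by simp
  have CA: "C = p*B + q*A" unfolding A_def B_def C_def j by simp
  have U2: "lucas p q (2*N) = C*B + q*A*B"
  proof -
    have e: "2*N = j + N + 1" using j by simp
    have e2: "j+1 = N" using j by simp
    have f: "lucas p q (j+N+1) = lucas p q (N+1) * lucas p q (j+1) + q * lucas p q N * lucas p q j"
      by (rule add_formula)
    show ?thesis unfolding e f e2 A_def[symmetric] B_def[symmetric] C_def[symmetric]
      by (simp add: algebra_simps)
  qed
  have U3: "lucas p q (2*N+1) = C*C + q*B*B"
    using add_formula[of p q N N] unfolding B_def C_def by (simp add: mult_2)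
  define X where "X = 2*b - 4*s*a - 2*s - 2*a"
  define Y where "Y = b*b+b+1+r*(2*a+1)*(2*a+1)+3*a*a+3*a"
  have qA: "q*A = C - p*B" using CA by simp
  have L1: "lucas p q (2*N) = B*(C + q*A)" using U2 by (simp add: algebra_simps)
  have L2: "C + q*A = 2*C - p*B" using CA by simp
  have L3: "B*(2*C - p*B) = (2*M)*(2*(a + m'*X*(2*a+1))+1)"
    unfolding B C s X_def using m' by (simp add: algebra_simps)
  have R1: "lucas p q (2*N) = (2*M)*(2*(a + m'*X*(2*a+1))+1)"
    using L1 L2 L3 by simp
  have R2: "lucas p q (2*N+1) = 1 + (2*M)*(2*(b + M*Y)+1)"
    unfolding U3 unfolding B C r Y_def by (simp add: algebra_simps)
  have P: "(2::nat)^Suc k = 2*N" "(2::int)^Suc k = 2*M" unfolding N_def M_def by simp_all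
  show ?case unfolding P using R1 R2 by blast
qed

lemma shift:
  fixes p q :: int
  assumes pq: "p mod 4 = 2" "q mod 4 = 3" and k: "k \<ge> 1"
  shows "(2*2^k::int) dvd (lucas p q (n + 2^k) - lucas p q n - 2^k)"
proof -
  obtain a b where ab: "lucas p q (2^k) = 2^k*(2*a+1)" "lucas p q (2^k+1) = 1 + 2^k*(2*b+1)"
    using key[OF pq k] by blast
  obtain s where s: "p = 4*s+2" using pq(1) by (metis mult.commute div_mult_mod_eq)
  obtain r where r: "q = 4*r+3" using pq(2) by (metis mult.commute div_mult_mod_eq)
  define N where "N = (2::nat)^k"
  define M where "M = (2::int)^k"
  have B: "lucas p q N = M*(2*a+1)" using ab unfolding N_def M_def by simp
  have C: "lucas p q (Suc N) = 1 + M*(2*b+1)" using ab unfolding N_def M_def by simp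
  have "(2*M) dvd (lucas p q (n + N) - lucas p q n - M) \<and>
        (2*M) dvd (lucas p q (Suc n + N) - lucas p q (Suc n) - M)"
  proof (induction n)
    case 0
    have "lucas p q (0 + N) - lucas p q 0 - M = (2*M)*a" using B by (simp add: algebra_simps)
    moreover have "lucas p q (Suc 0 + N) - lucas p q (Suc 0) - M = (2*M)*b" using C by (simp add: algebra_simps)
    ultimately show ?case by simp
  next
    case (Suc n)
    define D1 where "D1 = lucas p q (Suc n + N) - lucas p q (Suc n) - M"
    define D0 where "D0 = lucas p q (n + N) - lucas p q n - M"
    have d1: "(2*M) dvd D1" using Suc unfolding D1_def by simp
    have d0: "(2*M) dvd D0" using Suc unfolding D0_def by simp
    have e: "Suc (Suc n) + N = Suc (Suc (n + N))" by simp
    have "lucas p q (Suc (Suc n) + N) - lucas p q (Suc (Suc n)) - M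
          = p * D1 + q * D0 + (2*M)*(2*s+2*r+2)"
      unfolding e D1_def D0_def by (simp add: s r algebra_simps)
    moreover have "(2*M) dvd p * D1 + q * D0 + (2*M)*(2*s+2*r+2)"
      by (rule dvd_add[OF dvd_add[OF dvd_mult[OF d1] dvd_mult[OF d0]] dvd_triv_left])
    ultimately show ?case using d1 unfolding D1_def by simp
  qed
  then show ?thesis unfolding N_def M_def by simp
qed

lemma periodic:
  fixes p q :: int
  assumes pq: "p mod 4 = 2" "q mod 4 = 3" and k: "k \<ge> 1"
  shows "(2^k::int) dvd (lucas p q (n + 2^k) - lucas p q n)"
proof -
  have "(2^k::int) dvd (lucas p q (n + 2^k) - lucas p q n - 2^k)"
    using shift[OF pq k, of n] dvd_mult_right by blast
  then have "(2^k::int) dvd (lucas p q (n + 2^k) - lucas p q n - 2^k) + 2^k"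
    by (rule dvd_add) simp
  then show ?thesis by simp
qed

lemma inc:
  fixes p q :: int
  assumes pq: "p mod 4 = 2" "q mod 4 = 3" and k: "k \<ge> 1"
  shows "i < 2^k \<Longrightarrow> j < 2^k \<Longrightarrow> (2^k::int) dvd (lucas p q i - lucas p q j) \<Longrightarrow> i = j"
  using k
proof (induction k arbitrary: i j rule: nat_induct_at_least)
  case base
  then have "i < 2" "j < 2" by simp_all
  then have "i \<in> {0,1}" "j \<in> {0,1}" by auto
  then show ?case using base(3) by auto
next
  case (Suc k)
  define N where "N = (2::nat)^k"
  define M where "M = (2::int)^k"
  have NM: "(2::nat)^Suc k = 2*N" "(2::int)^Suc k = 2*M" unfolding N_def M_def by simp_all
  have Mpos: "M > 0" unfolding M_def by simp
  have red: "\<exists>n'<N. (n = n' \<or> n = n'+N) \<and> M dvd (lucas p q n - lucas p q n')" if "n < 2*N" for n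
  proof (cases "n < N")
    case True then show ?thesis by auto
  next
    case False
    then have "n = (n-N)+N" "n - N < N" using that by auto
    moreover have "M dvd (lucas p q ((n-N)+N) - lucas p q (n-N))"
      using periodic[OF pq Suc(1), of "n-N"] unfolding N_def M_def by simp
    ultimately show ?thesis by metis
  qed
  obtain i' where i': "i' < N" "i = i' \<or> i = i'+N" "M dvd (lucas p q i - lucas p q i')"
    using red[of i] Suc(3) NM by auto
  obtain j' where j': "j' < N" "j = j' \<or> j = j'+N" "M dvd (lucas p q j - lucas p q j')"
    using red[of j] Suc(4) NM by auto
  have dij: "(2*M) dvd (lucas p q i - lucas p q j)" using Suc(5) NM by simp
  have "M dvd (lucas p q i - lucas p q j)" using dij dvd_mult_right by blast
  then have "M dvd (lucas p q i - lucas p q j) - (lucas p q i - lucas p q i') + (lucas p q j - lucas p q j')"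
    by (rule dvd_add[OF dvd_diff[OF _ i'(3)] j'(3)])
  then have "M dvd (lucas p q i' - lucas p q j')" by (simp add: algebra_simps)
  then have ij: "i' = j'" using Suc.IH[of i' j'] i'(1) j'(1) unfolding N_def M_def by simp
  have bad: False if "2*M dvd (lucas p q (i'+N) - lucas p q i')"
  proof -
    have "2*M dvd (lucas p q (i'+N) - lucas p q i' - M)"
      using shift[OF pq Suc(1), of i'] unfolding N_def M_def by simp
    then have "2*M dvd (lucas p q (i'+N) - lucas p q i') - (lucas p q (i'+N) - lucas p q i' - M)"
      by (rule dvd_diff[OF that])
    then have "2*M dvd M" by simp
    then have "2*M \<le> M" using Mpos by (intro zdvd_imp_le) simp_all
    then show False using Mpos by simp
  qed
  show ?case
  proof (rule ccontr)
    assume "i \<noteq> j"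
    then have "(i = i' \<and> j = i'+N) \<or> (i = i'+N \<and> j = i')" using i'(2) j'(2) ij by auto
    then show False
    proof
      assume h: "i = i' \<and> j = i'+N"
      have "2*M dvd -(lucas p q i - lucas p q j)" using dij by (simp only: dvd_minus_iff)
      then show False using bad h by (simp add: algebra_simps)
    next
      assume h: "i = i'+N \<and> j = i'"
      then show False using bad dij by simp
    qed
  qed
qed

lemma disc_incong:
  assumes fd: "first_distinct w n"
  shows "\<forall>i<n. \<forall>j<n. i \<noteq> j \<longrightarrow> w i mod int (discriminator w n) \<noteq> w j mod int (discriminator w n)"
proof -
  define P where "P = (\<lambda>m. m > 0 \<and> (\<forall>i<n. \<forall>j<n. i \<noteq> j \<longrightarrow> w i mod int m \<noteq> w j mod int m))"
  define B where "B = Max (abs ` w ` {..<n})"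
  define m where "m = 2 * nat B + 1"
  have le: "\<bar>w i\<bar> \<le> B" if "i < n" for i
    unfolding B_def using that by (intro Max_ge) auto
  have "P m"
    unfolding P_def
  proof (intro conjI allI impI)
    show "m > 0" unfolding m_def by simp
    fix i j assume ij: "i < n" "j < n" "i \<noteq> j"
    have B0: "B \<ge> 0" using le[OF ij(1)] by linarith
    have im: "int m = 2*B + 1" unfolding m_def using B0 by simp
    have ne: "w i \<noteq> w j" using fd ij unfolding first_distinct_def by blast
    show "w i mod int m \<noteq> w j mod int m"
    proof
      assume "w i mod int m = w j mod int m"
      then have "int m dvd (w i - w j)" by (simp add: mod_eq_dvd_iff)
      then have "\<bar>int m\<bar> \<le> \<bar>w i - w j\<bar>" using ne by (intro dvd_imp_le_int) simp_all
      then show False using le[OF ij(1)] le[OF ij(2)] im by linarith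
    qed
  qed
  then have "P (LEAST m. P m)" by (rule LeastI)
  then show ?thesis unfolding P_def discriminator_def by blast
qed

theorem theorem5:
  fixes p q :: int
  shows "(\<forall>k::nat. k \<ge> 1 \<longrightarrow>
            first_distinct (lucas p q) (2 ^ k) \<and>
            discriminator (lucas p q) (2 ^ k) = 2 ^ k)
         \<longleftrightarrow> (p mod 4 = 2 \<and> q mod 4 = 3)"
proof
  assume A: "\<forall>k::nat. k \<ge> 1 \<longrightarrow>
            first_distinct (lucas p q) (2 ^ k) \<and>
            discriminator (lucas p q) (2 ^ k) = 2 ^ k"
  have A2: "first_distinct (lucas p q) (2^2)" "discriminator (lucas p q) (2^2) = 2^2" using A[rule_format, of 2] by simp_all
  have A3: "first_distinct (lucas p q) (2^3)" "discriminator (lucas p q) (2^3) = 2^3" using A[rule_format, of 3] by simp_all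
  have H4: "\<forall>i<4. \<forall>j<4. i \<noteq> j \<longrightarrow> lucas p q i mod 4 \<noteq> lucas p q j mod 4"
    using disc_incong[OF A2(1)] A2(2) by simp
  have H8: "\<forall>i<8. \<forall>j<8. i \<noteq> j \<longrightarrow> lucas p q i mod 8 \<noteq> lucas p q j mod 8"
    using disc_incong[OF A3(1)] A3(2) by simp
  define pm where "pm = p mod 8"
  define qm where "qm = q mod 8"
  have e8: "lucas p q n mod 8 = lucas pm qm n mod 8" for n
    unfolding pm_def qm_def by (rule lucas_mod)
  have pm4: "pm mod 4 = p mod 4" "qm mod 4 = q mod 4" unfolding pm_def qm_def
    by (simp_all add: mod_mod_cancel)
  have e4: "lucas p q n mod 4 = lucas pm qm n mod 4" for n
    using lucas_mod[of p q n 4] lucas_mod[of pm qm n 4] pm4 by simp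
  have "pm mod 4 = 2 \<and> qm mod 4 = 3"
    by (rule fin1) (use H4 H8 in \<open>simp_all add: e4 e8 pm_def qm_def\<close>)
  then show "p mod 4 = 2 \<and> q mod 4 = 3" using pm4 by simp
next
  assume pq: "p mod 4 = 2 \<and> q mod 4 = 3"
  show "\<forall>k::nat. k \<ge> 1 \<longrightarrow>
            first_distinct (lucas p q) (2 ^ k) \<and>
            discriminator (lucas p q) (2 ^ k) = 2 ^ k"
  proof (intro allI impI conjI)
    fix k :: nat assume k: "k \<ge> 1"
    have I: "i = j" if "i < 2^k" "j < 2^k" "(2^k::int) dvd (lucas p q i - lucas p q j)" for i j
      using inc[OF conjunct1[OF pq] conjunct2[OF pq] k that] .
    show "first_distinct (lucas p q) (2 ^ k)"
      unfolding first_distinct_def using I by fastforce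
    show "discriminator (lucas p q) (2 ^ k) = 2 ^ k"
      unfolding discriminator_def
    proof (rule Least_equality)
      show "0 < (2::nat)^k \<and> (\<forall>i<2^k. \<forall>j<2^k. i \<noteq> j \<longrightarrow> lucas p q i mod int (2^k) \<noteq> lucas p q j mod int (2^k))"
        using I by (auto simp: mod_eq_dvd_iff)
    next
      fix y assume y: "0 < y \<and> (\<forall>i<2^k. \<forall>j<2^k. i \<noteq> j \<longrightarrow> lucas p q i mod int y \<noteq> lucas p q j mod int y)"
      define f where "f = (\<lambda>i. nat (lucas p q i mod int y))"
      have "inj_on f {..<2^k}"
      proof (rule inj_onI)
        fix i j assume ij: "i \<in> {..<(2::nat)^k}" "j \<in> {..<(2::nat)^k}" "f i = f j"
        have "lucas p q i mod int y = lucas p q j mod int y"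
          using ij(3) y unfolding f_def by (simp add: nat_eq_iff)
        then show "i = j" using y ij by auto
      qed
      moreover have "f ` {..<2^k} \<subseteq> {..<y}"
        unfolding f_def using y by (auto simp: nat_less_iff)
      ultimately have "card {..<(2::nat)^k} \<le> card {..<y}"
        by (intro card_inj_on_le) auto
      then show "2^k \<le> y" by simp
    qed
  qed
qed

end
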